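(* Let $\mathbf{C}^+=\{\omega=x+\sqrt{-1}y\in\mathbf{C}: y>0\}$ and let $\mathcal H^n$ be the space of symmetric complex $n\times n$ matrices $M$ ($M^T=M$) with positive definite imaginary part $\operatorname{Im}M>0$. Let $K$ be a compact space and $F:K\times\mathbf{C}^+\to\mathcal H^n$ a continuous map such that for each $u\in K$ the map $\omega\mapsto F(u,\omega)$ is holomorphic on $\mathbf{C}^+$. Let $U_1=\{\omega=x+\sqrt{-1}y\in\mathbf{C}: -1<x<1,\ y\ge1\}$ and $F'=\partial F/\partial\omega$. Then there are constants $C_1>0$ and $C_2$ such that for all $(u,\omega)\in K\times U_1$, $$\det\operatorname{Im}F(u,\omega)\ge C_1y^{-n}\quad\text{and}\quad|\det F'(u,\omega)|\le C_2.$$ *)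

theory Defs
  imports "HOL-Analysis.Analysis" "HOL-Complex_Analysis.Complex_Analysis"
begin

definition upper_half_plane :: "complex set" where
  "upper_half_plane = {w. Im w > 0}"

definition U1 :: "complex set" where
  "U1 = {w. -1 < Re w \<and> Re w < 1 \<and> Im w \<ge> 1}"

definition Im_mat :: "complex^'n^'n \<Rightarrow> real^'n^'n" where
  "Im_mat M = (\<chi> i j. Im (M $ i $ j))"

definition pos_def_real :: "real^'n^'n \<Rightarrow> bool" where
  "pos_def_real A \<longleftrightarrow> transpose A = A \<and> (\<forall>x. x \<noteq> 0 \<longrightarrow> x \<bullet> (A *v x) > 0)"

definition siegel_H :: "(complex^'n^'n) set" where
  "siegel_H = {M. transpose M = M \<and> pos_def_real (Im_mat M)}"

definition mat_deriv :: "(complex \<Rightarrow> complex^'n^'n) \<Rightarrow> complex \<Rightarrow> complex^'n^'n" where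
  "mat_deriv G w = (\<chi> i j. deriv (\<lambda>z. G z $ i $ j) w)"

end

theory Submission
  imports Defs
begin
lemma mult_if0: "(x::real) * (if P then y else 0) = (if P then x * y else 0)" by simp
lemma mult_if01: "(x::real) * (if P then 1 else 0) = (if P then x else 0)" by simp

lemma R_mv:
  fixes c v :: "real^'n"
  shows "(\<chi> i j. (if i = j then 1 else 0) - (if i = k then c$j else 0)) *v v = v - (c \<bullet> v) *\<^sub>R axis k 1"
  by (auto simp add: vec_eq_iff matrix_vector_mult_def right_diff_distrib sum_subtractf inner_vec_def axis_def
      mult_if0 mult_if01 sum.delta sum.delta' mult.commute cong: if_cong)

lemma Rt_mv:
  fixes c v :: "real^'n"
  shows "transpose (\<chi> i j. (if i = j then 1 else 0) - (if i = k then c$j else 0)) *v v = v - (v$k) *\<^sub>R c"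
  by (auto simp add: vec_eq_iff matrix_vector_mult_def transpose_def right_diff_distrib sum_subtractf
      mult_if0 mult_if01 sum.delta sum.delta' mult.commute cong: if_cong)

lemma E_mv:
  fixes v :: "real^'n"
  shows "(\<chi> i j. if i = j then (if i = k then s else 1) else 0) *v v = v + ((s - 1) * v$k) *\<^sub>R axis k 1"
  by (auto simp add: vec_eq_iff matrix_vector_mult_def axis_def algebra_simps
      mult_if0 sum.delta sum.delta' cong: if_cong)

lemma E_tr:
  shows "transpose (\<chi> i j. if i = j then (if i = k then s else 1) else (0::real)) = (\<chi> i j. if i = j then (if i = k then s else 1) else 0)"
  by (auto simp add: vec_eq_iff transpose_def)

lemma det_E:
  shows "det (\<chi> i j. if i = j then (if i = k then s else 1) else (0::real)) = s"
proof -
  have "det (\<chi> i j. if i = j then (if i = k then s else 1) else (0::real)) = (\<Prod>i\<in>UNIV. if i = k then s else 1)"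
    by (subst det_diagonal) auto
  also have "\<dots> = s" by (simp add: prod.delta'[where b="\<lambda>_. s"] prod.If_cases)
  finally show ?thesis .
qed

lemma det_R:
  fixes c :: "real^'n"
  assumes "c$k = 0"
  shows "det (\<chi> i j. (if i = j then 1 else 0) - (if i = k then c$j else 0)) = 1"
proof -
  let ?I = "mat 1 :: real^'n^'n"
  have x: "- c \<in> vec.span {row j ?I |j. j \<noteq> k}"
  proof -
    have "- c = (\<Sum>j\<in>UNIV - {k}. (- c$j) *s row j ?I)"
      using assms
      by (auto simp: vec_eq_iff row_def mat_def sum_negf sum.delta sum.delta' mult_if0 mult_if01 cong: if_cong)
    also have "\<dots> \<in> vec.span {row j ?I |j. j \<noteq> k}"
      by (intro vec.span_sum vec.span_scale vec.span_base) auto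
    finally show ?thesis .
  qed
  have "(\<chi> i j. (if i = j then 1 else 0) - (if i = k then c$j else 0)) =
        (\<chi> k'. if k' = k then row k ?I + - c else row k' ?I)"
    by (auto simp: vec_eq_iff row_def mat_def)
  then show ?thesis using det_row_span[OF x] by simp
qed

lemma mv_axis: "((A::real^'n^'m) *v axis j 1) $ i = A$i$j"
  by (simp add: matrix_vector_mult_basis column_def)

lemma det_ge_aux:
  fixes l :: real and S :: "'n::finite set" and A :: "real^'n^'n"
  assumes "0 < l" "transpose A = A" "\<forall>i. i \<notin> S \<longrightarrow> A *v axis i 1 = axis i 1"
    "\<forall>v. (\<forall>i. i \<notin> S \<longrightarrow> v$i = 0) \<longrightarrow> l * (v \<bullet> v) \<le> v \<bullet> (A *v v)"
  shows "l ^ card S \<le> det A"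
proof -
  have "finite S" by simp
  from this assms(2-4) show ?thesis
  proof (induction S arbitrary: A rule: finite_induct)
    case empty
    have "A$i$j = mat 1 $ i $ j" for i j
    proof -
      have "A$i$j = (A *v axis j 1) $ i" by (simp add: mv_axis)
      also have "\<dots> = mat 1 $ i $ j" using empty.prems(2) by (simp add: mat_def axis_def)
      finally show ?thesis .
    qed
    then have "A = mat 1" by (simp add: vec_eq_iff)
    then show ?case by simp
  next
    case (insert k S A)
    define a where "a = A$k$k"
    have "l * ((axis k 1::real^'n) \<bullet> axis k 1) \<le> (axis k 1::real^'n) \<bullet> (A *v axis k (1::real))"
    proof -
      have "\<forall>i. i \<notin> insert k S \<longrightarrow> axis k (1::real) $ i = 0" by (auto simp add: axis_def)
      then show ?thesis by (rule insert.prems(3)[THEN spec, THEN mp])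
    qed
    then have la: "l \<le> a"
      by (simp add: a_def inner_axis_axis inner_axis' mv_axis)
    have apos: "0 < a" using la assms(1) by simp
    define c :: "real^'n" where "c = (\<chi> i. if i = k then 0 else A$i$k / a)"
    define R :: "real^'n^'n" where "R = (\<chi> i j. (if i = j then 1 else 0) - (if i = k then c$j else 0))"
    define E :: "real^'n^'n" where "E = (\<chi> i j. if i = j then (if i = k then 1 / sqrt a else 1) else 0)"
    define X where "X = R ** E"
    define B where "B = transpose X ** A ** X"
    have ck: "c$k = 0" by (simp add: c_def)
    have Rv: "\<And>v. R *v v = v - (c \<bullet> v) *\<^sub>R axis k 1" unfolding R_def by (rule R_mv)
    have Rtv: "\<And>v. transpose R *v v = v - (v$k) *\<^sub>R c" unfolding R_def by (rule Rt_mv)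
    have Ev: "\<And>v. E *v v = v + ((1 / sqrt a - 1) * v$k) *\<^sub>R axis k 1" unfolding E_def by (rule E_mv)
    have Et: "transpose E = E" unfolding E_def by (rule E_tr)
    have detE: "det E = 1 / sqrt a" unfolding E_def by (rule det_E)
    have detR: "det R = 1" unfolding R_def by (rule det_R[OF ck])
    have detX: "det X = 1 / sqrt a" unfolding X_def det_mul detE detR by simp
    have detB0: "det B = det X * det A * det X" unfolding B_def det_mul det_transpose ..
    have sq: "sqrt a * sqrt a = a" using apos by simp
    have detB: "det B = det A / a"
      unfolding detB0 detX using sq by (metis (no_types, lifting) mult.commute times_divide_eq_left times_divide_eq_right divide_divide_eq_left mult_1 div_by_1 nonzero_mult_div_cancel_left)
    have Bv: "\<And>v. B *v v = E *v (transpose R *v (A *v (R *v (E *v v))))"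
      by (simp add: B_def X_def matrix_vector_mul_assoc matrix_transpose_mul Et matrix_mul_assoc)
    have symB: "transpose B = B"
      by (simp add: B_def matrix_transpose_mul insert.prems(1) matrix_mul_assoc)
    have Aik: "A$i$k = 0" if "i \<notin> insert k S" for i
    proof -
      have "A$i$k = transpose A $ k $ i" by (simp add: transpose_def)
      also have "\<dots> = (A *v axis i 1) $ k" by (simp add: insert.prems(1) mv_axis)
      also have "\<dots> = 0" using that insert.prems(2) by (auto simp: axis_def)
      finally show ?thesis .
    qed
    have B1: "\<forall>i. i \<notin> S \<longrightarrow> B *v axis i 1 = axis i 1"
    proof (intro allI impI)
      fix i assume iS: "i \<notin> S"
      show "B *v axis i 1 = axis i 1"
      proof (cases "i = k")
        case True
        have "A *v axis k 1 - a *\<^sub>R c = a *\<^sub>R axis k 1"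
          using apos by (auto simp: vec_eq_iff c_def mv_axis a_def) (auto simp: axis_def)
        moreover have "c \<bullet> axis k 1 = 0" by (simp add: inner_axis ck)
        note col = calculation(1)
        define s where "s = 1 / sqrt a"
        have e1: "E *v axis k 1 = s *\<^sub>R axis k 1"
          by (auto simp: Ev vec_eq_iff axis_def s_def)
        have e2: "R *v (s *\<^sub>R axis k 1) = s *\<^sub>R axis k 1"
          by (simp add: Rv inner_axis ck)
        have e3: "A *v (s *\<^sub>R axis k 1) = s *\<^sub>R (A *v axis k 1)"
          by (simp add: matrix_vector_mult_scaleR)
        have e4: "transpose R *v (s *\<^sub>R (A *v axis k 1)) = (s * a) *\<^sub>R axis k 1"
        proof -
          have "transpose R *v (s *\<^sub>R (A *v axis k 1)) = s *\<^sub>R (A *v axis k 1 - a *\<^sub>R c)"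
            by (subst Rtv) (simp add: mv_axis a_def algebra_simps)
          also have "\<dots> = (s * a) *\<^sub>R axis k 1" using col by simp
          finally show ?thesis .
        qed
        have e5: "E *v ((s * a) *\<^sub>R axis k 1) = axis k 1"
        proof -
          have "s * a + (s - 1) * (s * a) = s * s * a" by (simp add: algebra_simps)
          also have "\<dots> = 1" using apos sq by (simp add: s_def)
          finally have "s * a + (s - 1) * (s * a) = 1" .
          then show ?thesis
            by (auto simp: Ev vec_eq_iff axis_def s_def[symmetric])
        qed
        show ?thesis using True
          by (simp add: Bv e1 e2 e3 e4 e5 del: transpose_matrix_vector)
      next
        case False
        then have "i \<notin> insert k S" using iS by simp
        then have ci: "c$i = 0" using Aik by (simp add: c_def)
        have "A *v axis i 1 = axis i 1" using insert.prems(2) \<open>i \<notin> insert k S\<close> by blast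
        moreover have f1: "E *v axis i 1 = axis i 1" using False by (simp add: Ev axis_def)
        moreover have f2: "R *v axis i 1 = axis i 1" using ci by (simp add: Rv inner_axis)
        moreover have f3: "transpose R *v axis i 1 = axis i 1" using False by (subst Rtv) (simp add: axis_def)
        ultimately show ?thesis
          by (simp add: Bv del: transpose_matrix_vector)
      qed
    qed
    have B2: "\<forall>v. (\<forall>i. i \<notin> S \<longrightarrow> v$i = 0) \<longrightarrow> l * (v \<bullet> v) \<le> v \<bullet> (B *v v)"
    proof (intro allI impI)
      fix v :: "real^'n" assume vS: "\<forall>i. i \<notin> S \<longrightarrow> v$i = 0"
      then have vk: "v$k = 0" using insert.hyps by blast
      define w where "w = v - (c \<bullet> v) *\<^sub>R axis k 1"
      have Evv: "E *v v = v" by (simp add: Ev vk)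
      have "v \<bullet> (B *v v) = v \<bullet> (transpose X *v (A *v (X *v v)))"
        by (simp add: B_def matrix_vector_mul_assoc matrix_mul_assoc del: transpose_matrix_vector)
      also have "\<dots> = (X *v v) \<bullet> (A *v (X *v v))"
        by (metis inner_commute dot_lmul_matrix transpose_matrix_vector)
      also have "X *v v = w" by (simp add: X_def w_def flip: matrix_vector_mul_assoc) (simp add: Evv Rv)
      finally have eq: "v \<bullet> (B *v v) = w \<bullet> (A *v w)" .
      have "\<forall>i. i \<notin> insert k S \<longrightarrow> w$i = 0" using vS by (auto simp: w_def axis_def)
      then have "l * (w \<bullet> w) \<le> w \<bullet> (A *v w)" using insert.prems(3) by blast
      moreover have "w \<bullet> w = v \<bullet> v + (c \<bullet> v)^2"
        by (simp add: w_def inner_diff_left inner_diff_right inner_axis inner_axis' vk power2_eq_square inner_commute)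
      ultimately show "l * (v \<bullet> v) \<le> v \<bullet> (B *v v)"
        using eq assms(1) by (smt (verit) mult_left_mono zero_le_power2)
    qed
    have "l ^ card S \<le> det B" using insert.IH[OF symB B1 B2] .
    then have "l * l ^ card S \<le> a * det B"
      using la assms(1) by (intro mult_mono) auto
    also have "a * det B = det A" using apos by (simp add: detB)
    finally show ?case using insert.hyps by simp
  qed
qed


lemma half_dist_lt:
  fixes w a :: complex
  assumes "Im w > 0" "Im a > 0"
  shows "cmod (w - a) < cmod (w - cnj a)"
proof -
  have e1: "(cmod (w - a))^2 = (Re w - Re a)^2 + (Im w - Im a)^2" by (simp add: cmod_power2)
  have e2: "(cmod (w - cnj a))^2 = (Re w - Re a)^2 + (Im w + Im a)^2" by (simp add: cmod_power2)
  have "(Im w - Im a)^2 < (Im w + Im a)^2"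
    using assms by (simp add: power2_eq_square algebra_simps)
  then have "(cmod (w - a))^2 < (cmod (w - cnj a))^2" unfolding e1 e2 by simp
  then show ?thesis by (simp add: power_less_imp_less_base)
qed

lemma psi_Im:
  fixes \<zeta> :: complex
  assumes "cmod \<zeta> < 1"
  shows "Im (\<i> * (1 + \<zeta>) / (1 - \<zeta>)) > 0"
proof -
  have ne: "1 - \<zeta> \<noteq> 0" using assms by auto
  have "(Re \<zeta>)^2 + (Im \<zeta>)^2 < 1"
  proof -
    have "(cmod \<zeta>)^2 < 1" using assms by (simp add: abs_square_less_1)
    then show ?thesis by (simp add: cmod_power2)
  qed
  then have "0 < (1 + Re \<zeta>) * (1 - Re \<zeta>) - Im \<zeta> * Im \<zeta>"
    by (simp add: power2_eq_square algebra_simps)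
  moreover have "Im (\<i> * (1 + \<zeta>) / (1 - \<zeta>)) = ((1 + Re \<zeta>) * (1 - Re \<zeta>) - Im \<zeta> * Im \<zeta>) / (cmod (1 - \<zeta>))^2"
    by (simp add: Im_divide Re_divide cmod_power2 algebra_simps)
  moreover have "(cmod (1 - \<zeta>))^2 > 0" using ne by simp
  ultimately show ?thesis by simp
qed

lemma schwarz_half:
  fixes g :: "complex \<Rightarrow> complex"
  assumes hol: "g holomorphic_on {w. Im w > 0}" and pos: "\<And>w. Im w > 0 \<Longrightarrow> Im (g w) > 0"
    and z: "Im z > 0"
  shows "cmod (g z - g \<i>) * cmod (z + \<i>) \<le> cmod (z - \<i>) * cmod (g z - cnj (g \<i>))"
proof -
  define a where "a = g \<i>"
  have apos: "Im a > 0" using pos[of \<i>] by (simp add: a_def)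
  define \<psi> where "\<psi> = (\<lambda>\<zeta>::complex. \<i> * (1 + \<zeta>) / (1 - \<zeta>))"
  define h where "h = (\<lambda>\<zeta>. (g (\<psi> \<zeta>) - a) / (g (\<psi> \<zeta>) - cnj a))"
  have psiH: "Im (\<psi> \<zeta>) > 0" if "\<zeta> \<in> ball 0 1" for \<zeta>
    using psi_Im[of \<zeta>] that by (simp add: \<psi>_def)
  have holpsi: "\<psi> holomorphic_on ball 0 1"
    unfolding \<psi>_def by (intro holomorphic_intros) auto
  have holgpsi: "(\<lambda>\<zeta>. g (\<psi> \<zeta>)) holomorphic_on ball 0 1"
  proof -
    have "\<psi> ` ball 0 1 \<subseteq> {w. Im w > 0}" using psiH by auto
    then show ?thesis using holomorphic_on_compose_gen[OF holpsi hol] by (simp add: o_def)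
  qed
  have den: "g (\<psi> \<zeta>) - cnj a \<noteq> 0" if "\<zeta> \<in> ball 0 1" for \<zeta>
  proof -
    have "Im (g (\<psi> \<zeta>) - cnj a) > 0" using pos[OF psiH[OF that]] apos by simp
    then show ?thesis by auto
  qed
  have holh: "h holomorphic_on ball 0 1"
    unfolding h_def by (intro holomorphic_intros holgpsi den)
  have h0: "h 0 = 0" by (simp add: h_def \<psi>_def a_def)
  have hlt: "norm (h \<zeta>) < 1" if "norm \<zeta> < 1" for \<zeta>
  proof -
    have "\<zeta> \<in> ball 0 1" using that by simp
    then have "cmod (g (\<psi> \<zeta>) - a) < cmod (g (\<psi> \<zeta>) - cnj a)"
      using half_dist_lt[OF pos[OF psiH] apos] by blast
    then show ?thesis by (simp add: h_def norm_divide divide_less_eq)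
  qed
  define \<zeta> where "\<zeta> = (z - \<i>) / (z + \<i>)"
  have zi: "z + \<i> \<noteq> 0" using z by (auto simp: complex_eq_iff)
  have lt: "cmod (z - \<i>) < cmod (z + \<i>)"
    using half_dist_lt[OF z, of \<i>] by simp
  have nz: "norm \<zeta> < 1" using lt zi by (simp add: \<zeta>_def norm_divide divide_less_eq)
  have z1: "1 + \<zeta> = 2 * z / (z + \<i>)" using zi by (simp add: \<zeta>_def field_simps)
  have z2: "1 - \<zeta> = 2 * \<i> / (z + \<i>)" using zi by (simp add: \<zeta>_def field_simps)
  have e: "\<i> * (z * 2) - 2 = 2 * \<i> * (z + \<i>)" by (simp add: algebra_simps)
  have nz2: "\<i> * (z * 2) - 2 \<noteq> 0" unfolding e using zi by simp
  have psiz: "\<psi> \<zeta> = z"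
    unfolding \<psi>_def z1 z2 using zi nz2 by (simp add: field_simps)
  have "norm (h \<zeta>) \<le> norm \<zeta>"
    using Schwarz_Lemma(1)[OF holh h0 hlt nz] .
  moreover have dz: "g z - cnj a \<noteq> 0"
  proof -
    have "Im (g z - cnj a) > 0" using pos[OF z] apos by simp
    then show ?thesis by auto
  qed
  have n1: "norm (h \<zeta>) = cmod (g z - a) / cmod (g z - cnj a)"
    unfolding h_def psiz by (simp add: norm_divide)
  have n2: "norm \<zeta> = cmod (z - \<i>) / cmod (z + \<i>)" by (simp add: \<zeta>_def norm_divide)
  have p1: "cmod (g z - cnj a) > 0" using dz by simp
  have p2: "cmod (z + \<i>) > 0" using zi by simp
  ultimately have "cmod (g z - a) / cmod (g z - cnj a) \<le> cmod (z - \<i>) / cmod (z + \<i>)"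
    using n1 n2 by simp
  then show ?thesis
    using p1 p2 by (simp add: a_def[symmetric] divide_le_eq le_divide_eq field_simps)
qed


lemma rb1:
  fixes s vv b y D E :: real
  assumes "0 < vv" "0 < b" "0 < y" "D = E + 4*y" "0 \<le> E" "0 \<le> s"
    "(s + (vv - b)^2) * D \<le> E * (s + (vv+b)^2)"
  shows "b*y \<le> vv*D"
proof -
  have "s*E \<le> s*D" using assms(3,4,6) by (intro mult_left_mono) auto
  moreover have "(s + (vv - b)^2) * D = s*D + (vv - b)^2 * D" by (simp add: distrib_right)
  moreover have "E * (s + (vv+b)^2) = s*E + E*(vv+b)^2" by (simp add: distrib_left mult.commute)
  ultimately have "(vv - b)^2 * D \<le> E * (vv+b)^2" using assms(7) by linarith
  then have "4*y*(vv^2 + b^2) \<le> 2* vv*b*(D+E)"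
    using assms(4) by (simp add: power2_eq_square algebra_simps)
  moreover have "4*y*b^2 \<le> 4*y*(vv^2+b^2)" using assms(3) by (simp add: power2_eq_square)
  moreover have "2* vv*b*(D+E) \<le> 4* vv*b*D" using assms by (simp add: power2_eq_square algebra_simps)
  ultimately have "4*y*b^2 \<le> 4* vv*b*D" by linarith
  then have "b * (y*b) \<le> b * (vv*D)" by (simp add: power2_eq_square algebra_simps)
  then show ?thesis using assms(2) by (simp add: mult.commute)
qed

lemma rb2:
  fixes t vv b y D E :: real
  assumes "0 < vv" "0 < b" "0 < y" "D = E + 4*y" "0 \<le> E" "0 \<le> t"
    "t^2 * D \<le> E * (t^2 + 4* vv*b)" "vv \<le> b + t"
  shows "t*y \<le> b*D"
proof (rule ccontr)
  assume "\<not> t*y \<le> b*D"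
  then have c: "b*D < t*y" by simp
  have bD: "0 < b*D" using assms(2,3,4,5) by simp
  then have tpos: "0 < t" using c assms(3) by (metis mult_pos_pos not_less zero_less_mult_pos2 less_trans mult.commute) 
  have "y*t^2 \<le> E* vv*b" using assms(4,7) by (simp add: power2_eq_square algebra_simps)
  also have "\<dots> \<le> E*b*(b+t)"
  proof -
    have "E*b \<ge> 0" using assms by simp
    then have "E*b* vv \<le> E*b*(b+t)" using assms(8) by (simp add: mult_left_mono)
    then show ?thesis by (simp add: ac_simps)
  qed
  finally have 1: "y*t^2 \<le> E*b*b + E*b*t" by (simp add: algebra_simps)
  have "b*E \<le> b*D" using assms(2,3,4) by simp
  then have "b*E < t*y" using c by linarith
  have by0: "0 < b*y" using assms(2,3) by simp
  have "b*D = E*b + 4*(b*y)" using assms(4) by (simp add: algebra_simps)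
  then have h1: "E*b + b*y < t*y" using c by0 by linarith
  then have A1: "t*(E*b + b*y) < t*(t*y)" using tpos by (rule mult_strict_left_mono)
  have h2: "E*b < t*y" using h1 assms(2,3) by (smt (verit) mult_pos_pos)
  then have A2: "b*(E*b) < b*(t*y)" using assms(2) by (rule mult_strict_left_mono)
  have A3: "y*t^2 \<le> E*b*b + E*b*t" by (rule 1)
  show False using A1 A2 A3 by (simp add: algebra_simps power2_eq_square)
qed
lemma half_bounds:
  fixes w a z :: complex
  assumes S: "cmod (w - a) * cmod (z + \<i>) \<le> cmod (z - \<i>) * cmod (w - cnj a)"
    and v: "Im w > 0" and b: "Im a > 0" and y: "Im z > 0"
  shows "Im a * Im z \<le> Im w * (cmod (z + \<i>))^2"
    and "cmod (w - a) * Im z \<le> Im a * (cmod (z + \<i>))^2"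
proof -
  define D where "D = (cmod (z + \<i>))^2"
  define E where "E = (cmod (z - \<i>))^2"
  define s where "s = (Re w - Re a)^2"
  define t where "t = cmod (w - a)"
  have D': "D = (Re z)^2 + (Im z + 1)^2" unfolding D_def cmod_power2 by simp
  have E': "E = (Re z)^2 + (Im z - 1)^2" unfolding E_def cmod_power2 by simp
  have DE: "D = E + 4 * Im z" unfolding D' E' by (simp add: power2_eq_square algebra_simps)
  have E0: "0 \<le> E" by (simp add: E_def)
  have s0: "0 \<le> s" by (simp add: s_def)
  have t2: "t^2 = s + (Im w - Im a)^2" by (simp add: t_def s_def cmod_power2)
  have W2: "(cmod (w - cnj a))^2 = s + (Im w + Im a)^2" by (simp add: s_def cmod_power2)
  have W2': "(cmod (w - cnj a))^2 = t^2 + 4 * Im w * Im a" unfolding W2 t2 by (simp add: power2_eq_square algebra_simps)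
  have "(cmod (w - a) * cmod (z + \<i>))^2 \<le> (cmod (z - \<i>) * cmod (w - cnj a))^2"
    using S by (intro power_mono) auto
  then have sq: "t^2 * D \<le> E * (cmod (w - cnj a))^2"
    by (simp add: t_def D_def E_def power_mult_distrib)
  show "Im a * Im z \<le> Im w * (cmod (z + \<i>))^2"
    using rb1[OF v b y DE E0 s0] sq unfolding t2 W2 D_def[symmetric] by (simp add: mult.commute)
  have "Im w \<le> Im a + t"
    using abs_Im_le_cmod[of "w - a"] by (simp add: t_def)
  then show "cmod (w - a) * Im z \<le> Im a * (cmod (z + \<i>))^2"
    using rb2[OF v b y DE E0, of t] sq unfolding W2' D_def[symmetric] t_def[symmetric] by (simp add: t_def)
qed


definition Qb :: "real^'n \<Rightarrow> real^'n \<Rightarrow> complex^'n^'n \<Rightarrow> complex" where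
  "Qb v w M = (\<Sum>k\<in>UNIV. \<Sum>l\<in>UNIV. of_real (v$k * w$l) * M$k$l)"

definition Q :: "real^'n \<Rightarrow> complex^'n^'n \<Rightarrow> complex" where
  "Q v M = Qb v v M"

lemma Q_Im: "Im (Q v M) = v \<bullet> (Im_mat M *v v)"
  by (simp add: Q_def Qb_def Im_mat_def inner_vec_def matrix_vector_mult_def Im_sum sum_distrib_left ac_simps)

lemma Qb_add1: "Qb (a + b) c M = Qb a c M + Qb b c M"
  by (simp add: Qb_def distrib_right sum.distrib)

lemma Qb_add2: "Qb c (a + b) M = Qb c a M + Qb c b M"
  by (simp add: Qb_def distrib_left distrib_right sum.distrib)

lemma ax1: "of_real (axis i 1 $ k * axis j 1 $ l) * (x::complex) = (if k = i then (if l = j then x else 0) else 0)"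
  by (simp add: axis_def)

lemma sum_if_const: "(\<Sum>l\<in>S. if P then f l else 0) = (if P then \<Sum>l\<in>S. f l else 0)"
  by simp

lemma Qb_axis: "Qb (axis i 1) (axis j 1) M = M$i$j"
  unfolding Qb_def ax1 sum_if_const by (simp add: sum.delta)

lemma Q_axis: "Q (axis i 1) M = M$i$i"
  by (simp add: Q_def Qb_axis)

lemma Q_axis2: "Q (axis i 1 + axis j 1) M = M$i$i + M$i$j + M$j$i + M$j$j"
  by (simp add: Q_def Qb_add1 Qb_add2 Qb_axis)

lemma Q_zero: "Q 0 M = 0" by (simp add: Q_def Qb_def)

lemma Q_scale: "Q (r *\<^sub>R v) M = of_real (r^2) * Q v M"
  by (simp add: Q_def Qb_def sum_distrib_left power2_eq_square ac_simps)

lemma Q_holo: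
  fixes F :: "complex \<Rightarrow> complex^'n^'n"
  assumes "\<And>i j. (\<lambda>w. F w $ i $ j) holomorphic_on S"
  shows "(\<lambda>w. Q v (F w)) holomorphic_on S"
  unfolding Q_def Qb_def by (intro holomorphic_intros assms)

lemma siegel_pos:
  assumes "M \<in> siegel_H" "v \<noteq> 0"
  shows "Im (Q v M) > 0"
  using assms by (simp add: Q_Im siegel_H_def pos_def_real_def)

lemma Fbounds:
  fixes F :: "complex \<Rightarrow> complex^'n^'n"
  assumes hol: "\<And>i j. (\<lambda>w. F w $ i $ j) holomorphic_on upper_half_plane"
    and sH: "\<And>w. w \<in> upper_half_plane \<Longrightarrow> F w \<in> siegel_H"
    and z: "Im z > 0"
  shows "Im (Q v (F \<i>)) * Im z \<le> Im (Q v (F z)) * (cmod (z + \<i>))^2"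
    and "cmod (Q v (F z) - Q v (F \<i>)) * Im z \<le> Im (Q v (F \<i>)) * (cmod (z + \<i>))^2"
proof -
  have "Im (Q v (F \<i>)) * Im z \<le> Im (Q v (F z)) * (cmod (z + \<i>))^2 \<and>
        cmod (Q v (F z) - Q v (F \<i>)) * Im z \<le> Im (Q v (F \<i>)) * (cmod (z + \<i>))^2"
  proof (cases "v = 0")
    case True
    then show ?thesis by (simp add: Q_zero)
  next
    case False
    define g where "g = (\<lambda>w. Q v (F w))"
    have holg: "g holomorphic_on {w. Im w > 0}"
      unfolding g_def using Q_holo[OF hol] by (simp add: upper_half_plane_def)
    have posg: "Im (g w) > 0" if "Im w > 0" for w
      unfolding g_def using siegel_pos[OF sH False] that by (simp add: upper_half_plane_def)
    have S: "cmod (g z - g \<i>) * cmod (z + \<i>) \<le> cmod (z - \<i>) * cmod (g z - cnj (g \<i>))"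
      by (rule schwarz_half[OF holg posg z])
    have gi: "Im (g \<i>) > 0" by (rule posg) simp
    from half_bounds[OF S posg[OF z] gi z] show ?thesis by (simp add: g_def)
  qed
  then show "Im (Q v (F \<i>)) * Im z \<le> Im (Q v (F z)) * (cmod (z + \<i>))^2"
    and "cmod (Q v (F z) - Q v (F \<i>)) * Im z \<le> Im (Q v (F \<i>)) * (cmod (z + \<i>))^2"
    by auto
qed

lemma det_ge:
  fixes A :: "real^'n^'n"
  assumes "0 < l" "transpose A = A" "\<And>v. l * (v \<bullet> v) \<le> v \<bullet> (A *v v)"
  shows "l ^ CARD('n) \<le> det A"
  using det_ge_aux[of l A UNIV] assms by simp

lemma det_abs_le:
  fixes M :: "complex^'n^'n"
  assumes "\<And>i j. cmod (M$i$j) \<le> c"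
  shows "cmod (det M) \<le> real (card {p. p permutes (UNIV::'n set)}) * c ^ CARD('n)"
proof -
  have c0: "0 \<le> c" using assms[of undefined undefined] norm_ge_zero[of "M$undefined$undefined"] by linarith
  have "cmod (det M) \<le> (\<Sum>p\<in>{p. p permutes (UNIV::'n set)}. cmod (of_int (sign p) * (\<Prod>i\<in>UNIV. M$i$p i)))"
    unfolding det_def by (rule norm_sum)
  also have "\<dots> \<le> (\<Sum>p\<in>{p. p permutes (UNIV::'n set)}. c ^ CARD('n))"
  proof (rule sum_mono)
    fix p assume "p \<in> {p. p permutes (UNIV::'n set)}"
    have "cmod (of_int (sign p) * (\<Prod>i\<in>UNIV. M$i$p i)) = (\<Prod>i\<in>UNIV. cmod (M$i$p i))"
      by (simp add: norm_mult prod_norm sign_def)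
    also have "\<dots> \<le> (\<Prod>i\<in>(UNIV::'n set). c)"
      by (intro prod_mono) (auto simp: assms)
    also have "\<dots> = c ^ CARD('n)" by simp
    finally show "cmod (of_int (sign p) * (\<Prod>i\<in>UNIV. M$i$p i)) \<le> c ^ CARD('n)" .
  qed
  also have "\<dots> = real (card {p. p permutes (UNIV::'n set)}) * c ^ CARD('n)" by simp
  finally show ?thesis .
qed

theorem mainTheorem8:
  fixes K :: "'a::topological_space set"
    and F :: "'a \<Rightarrow> complex \<Rightarrow> complex^'n^'n"
  assumes "compact K"
    and "continuous_on (K \<times> upper_half_plane) (\<lambda>(u, w). F u w)"
    and "\<And>u w. u \<in> K \<Longrightarrow> w \<in> upper_half_plane \<Longrightarrow> F u w \<in> siegel_H"
    and "\<And>u i j. u \<in> K \<Longrightarrow> (\<lambda>w. F u w $ i $ j) holomorphic_on upper_half_plane"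
  shows "\<exists>C1 C2. C1 > 0 \<and> (\<forall>u\<in>K. \<forall>w\<in>U1.
           det (Im_mat (F u w)) \<ge> C1 / (Im w) ^ CARD('n) \<and>
           cmod (det (mat_deriv (F u) w)) \<le> C2)"
proof -
  have Hi: "\<i> \<in> upper_half_plane" by (simp add: upper_half_plane_def)
  have contFi: "continuous_on K (\<lambda>u. F u \<i>)"
  proof -
    have "continuous_on K (\<lambda>u. (u, \<i>))" by (intro continuous_intros)
    moreover have "(\<lambda>u. (u, \<i>)) ` K \<subseteq> K \<times> upper_half_plane" using Hi by auto
    ultimately have "continuous_on K (\<lambda>x. (\<lambda>(u, w). F u w) ((\<lambda>u. (u, \<i>)) x))"
      by (rule continuous_on_compose2[OF assms(2)])
    then show ?thesis by simp
  qed
  obtain B0 where B0: "B0 > 0" "\<And>u. u \<in> K \<Longrightarrow> norm (F u \<i>) \<le> B0"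
  proof -
    have "bounded ((\<lambda>u. F u \<i>) ` K)"
      by (rule compact_imp_bounded[OF compact_continuous_image[OF contFi assms(1)]])
    then obtain b where "b > 0" "\<forall>x\<in>(\<lambda>u. F u \<i>) ` K. norm x \<le> b" unfolding bounded_pos by blast
    then show ?thesis using that by auto
  qed
  have entry: "cmod (F u \<i> $ k $ l) \<le> B0" if "u \<in> K" for u k l
    using Finite_Cartesian_Product.norm_nth_le[of "F u \<i> $ k" l] Finite_Cartesian_Product.norm_nth_le[of "F u \<i>" k] B0(2)[OF that] by linarith
  obtain m0 where m0: "m0 > 0" "\<And>u v. u \<in> K \<Longrightarrow> m0 * (v \<bullet> v) \<le> v \<bullet> (Im_mat (F u \<i>) *v v)"
  proof (cases "K = {}")
    case True
    then show ?thesis using that[of 1] by auto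
  next
    case False
    define f where "f = (\<lambda>p::'a \<times> (real^'n). Im (Q (snd p) (F (fst p) \<i>)))"
    have feq: "f = (\<lambda>p. \<Sum>k\<in>UNIV. \<Sum>l\<in>UNIV. (snd p $ k * snd p $ l) * Im (F (fst p) \<i> $ k $ l))"
      by (simp add: f_def Q_def Qb_def Im_sum fun_eq_iff)
    have c1: "continuous_on (K \<times> sphere 0 1) (\<lambda>p::'a \<times> (real^'n). F (fst p) \<i>)"
      by (rule continuous_on_compose2[OF contFi continuous_on_fst]) auto
    have contf: "continuous_on (K \<times> sphere 0 1) f"
      unfolding feq by (intro continuous_intros c1)
    have "compact (K \<times> sphere (0::real^'n) 1)" by (intro compact_Times assms(1) compact_sphere)
    moreover have "K \<times> sphere (0::real^'n) 1 \<noteq> {}" using False by simp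
    ultimately obtain p0 where p0: "p0 \<in> K \<times> sphere 0 1" "\<And>p. p \<in> K \<times> sphere 0 1 \<Longrightarrow> f p0 \<le> f p"
      using continuous_attains_inf[OF _ _ contf] by blast
    have "snd p0 \<noteq> 0" using p0(1) by auto
    moreover have "F (fst p0) \<i> \<in> siegel_H" using p0(1) Hi assms(3) by auto
    ultimately have fpos: "f p0 > 0" unfolding f_def by (rule siegel_pos[rotated])
    have "f p0 * (v \<bullet> v) \<le> v \<bullet> (Im_mat (F u \<i>) *v v)" if u: "u \<in> K" for u v
    proof (cases "v = 0")
      case True then show ?thesis by simp
    next
      case False
      define e where "e = (1 / norm v) *\<^sub>R v"
      have e1: "e \<in> sphere 0 1" using False by (simp add: e_def)
      have ve: "v = norm v *\<^sub>R e" using False by (simp add: e_def)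
      have "f p0 \<le> f (u, e)" using p0(2)[of "(u, e)"] u e1 by auto
      then have "(norm v)^2 * f p0 \<le> (norm v)^2 * f (u, e)" by (simp add: mult_left_mono)
      also have "(norm v)^2 * f (u, e) = Im (Q v (F u \<i>))"
        by (subst (2) ve) (simp add: f_def Q_scale)
      also have "\<dots> = v \<bullet> (Im_mat (F u \<i>) *v v)" by (simp add: Q_Im)
      finally show ?thesis by (simp add: power2_norm_eq_inner mult.commute)
    qed
    then show ?thesis using that[of "f p0"] fpos by blast
  qed
  define C1 where "C1 = (m0/5) ^ CARD('n)"
  define Cd where "Cd = 102 * B0 + 2"
  define C2 where "C2 = real (card {p. p permutes (UNIV::'n set)}) * Cd ^ CARD('n)"
  show ?thesis
  proof (intro exI conjI ballI)
    show "C1 > 0" using m0 by (simp add: C1_def)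
    fix u w assume u: "u \<in> K" and w: "w \<in> U1"
    have y1: "1 \<le> Im w" and rw: "-1 < Re w" "Re w < 1" using w by (auto simp: U1_def)
    have wH: "Im w > 0" using y1 by simp
    have holu: "\<And>i j. (\<lambda>w. F u w $ i $ j) holomorphic_on upper_half_plane" using assms(4) u by blast
    have sHu: "\<And>w. w \<in> upper_half_plane \<Longrightarrow> F u w \<in> siegel_H" using assms(3) u by blast
    show "C1 / (Im w) ^ CARD('n) \<le> det (Im_mat (F u w))"
    proof -
      define y where "y = Im w"
      define D where "D = (cmod (w + \<i>))^2"
      have ypos: "y > 0" using wH by (simp add: y_def)
      have D5: "D \<le> 5 * y^2"
      proof -
        have "D = (Re w)^2 + (y + 1)^2" by (simp add: D_def y_def cmod_power2)
        moreover have "(Re w)^2 \<le> 1" using rw by (simp add: abs_square_le_1)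
        moreover have "y \<le> y^2" using y1 by (simp add: y_def power2_eq_square)
        moreover have "1 \<le> y" using y1 by (simp add: y_def)
        moreover have "(y + 1)^2 = y^2 + 2*y + 1" by (simp add: power2_eq_square algebra_simps)
        ultimately show ?thesis by linarith
      qed
      define l where "l = m0 / (5 * y)"
      have lpos: "l > 0" using m0(1) ypos by (simp add: l_def)
      have quad: "l * (v \<bullet> v) \<le> v \<bullet> (Im_mat (F u w) *v v)" for v
      proof -
        define a where "a = v \<bullet> (Im_mat (F u w) *v v)"
        have a0: "a \<ge> 0"
        proof (cases "v = 0")
          case True then show ?thesis by (simp add: a_def)
        next
          case False
          have "F u w \<in> siegel_H" using sHu wH by (simp add: upper_half_plane_def)
          from siegel_pos[OF this False] show ?thesis by (simp add: a_def Q_Im)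
        qed
        have "m0 * (v \<bullet> v) * y \<le> Im (Q v (F u \<i>)) * y"
          using m0(2)[OF u, of v] ypos by (simp add: Q_Im)
        also have "\<dots> \<le> a * D"
          using Fbounds(1)[OF holu sHu wH, of v] by (simp add: a_def D_def y_def Q_Im)
        also have "\<dots> \<le> a * (5 * y^2)" using a0 D5 by (rule mult_left_mono[rotated])
        finally have "(m0 * (v \<bullet> v)) * y \<le> (a * (5 * y)) * y" by (simp add: power2_eq_square ac_simps)
        then have "m0 * (v \<bullet> v) \<le> a * (5 * y)" using ypos by (rule mult_right_le_imp_le)
        then have "m0 * (v \<bullet> v) / (5 * y) \<le> a" using ypos by (simp add: pos_divide_le_eq)
        then show ?thesis by (simp add: l_def a_def)
      qed
      have symA: "transpose (Im_mat (F u w)) = Im_mat (F u w)"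
        using sHu[of w] wH by (simp add: siegel_H_def pos_def_real_def upper_half_plane_def)
      have "l ^ CARD('n) \<le> det (Im_mat (F u w))" by (rule det_ge[OF lpos symA quad])
      moreover have "l ^ CARD('n) = C1 / y ^ CARD('n)"
        by (simp add: l_def C1_def power_divide power_mult_distrib)
      ultimately show ?thesis by (simp add: y_def)
    qed
    show "cmod (det (mat_deriv (F u) w)) \<le> C2"
    proof -
      define y where "y = Im w"
      have ypos: "y > 0" using wH by (simp add: y_def)
      have y1': "1 \<le> y" using y1 by (simp add: y_def)
      define r where "r = y / 2"
      have rpos: "r > 0" using ypos by (simp add: r_def)
      have sym: "M $ j $ i = M $ i $ j" if "M \<in> siegel_H" for M :: "complex^'n^'n" and i j
      proof -
        have "transpose M = M" using that by (simp add: siegel_H_def)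
        then have "transpose M $ i $ j = M $ i $ j" by simp
        then show ?thesis by (simp add: transpose_def)
      qed
      have near: "\<bar>Im z - y\<bar> < r \<and> \<bar>Re z - Re w\<bar> < r" if "z \<in> ball w r" for z
      proof -
        have d: "cmod (z - w) < r" using that by (simp add: dist_norm norm_minus_commute)
        show ?thesis using abs_Im_le_cmod[of "z - w"] abs_Re_le_cmod[of "z - w"] d by (simp add: y_def)
      qed
      have ballH: "cball w r \<subseteq> upper_half_plane"
      proof
        fix z assume "z \<in> cball w r"
        then have d: "cmod (z - w) \<le> r" by (simp add: dist_norm norm_minus_commute)
        have "\<bar>Im z - y\<bar> \<le> r" using abs_Im_le_cmod[of "z - w"] d by (simp add: y_def)
        then have "Im z > 0" using ypos unfolding r_def abs_le_iff by linarith
        then show "z \<in> upper_half_plane" by (simp add: upper_half_plane_def)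
      qed
      have entries: "cmod (mat_deriv (F u) w $ i $ j) \<le> Cd" for i j
      proof -
        define f where "f = (\<lambda>z. F u z $ i $ j)"
        have holH: "f holomorphic_on upper_half_plane" unfolding f_def by (rule holu)
        have holf: "f holomorphic_on ball w r"
          using holomorphic_on_subset[OF holH] ballH ball_subset_cball by blast
        have contf: "continuous_on (cball w r) f"
          using holomorphic_on_imp_continuous_on[OF holomorphic_on_subset[OF holH ballH]] .
        have inball: "f z \<in> ball (f \<i>) (51 * B0 * y)" if z: "z \<in> ball w r" for z
        proof -
          have nz: "\<bar>Im z - y\<bar> < r" "\<bar>Re z - Re w\<bar> < r" using near[OF z] by auto
          have zlo: "Im z > y / 2" using nz(1) unfolding r_def abs_less_iff by linarith
          have zH: "Im z > 0" using zlo ypos by linarith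
          have zHH: "z \<in> upper_half_plane" using zH by (simp add: upper_half_plane_def)
          define Dz where "Dz = (cmod (z + \<i>))^2"
          have Dz_lt: "Dz < 17/2 * y^2"
          proof -
            have e: "Dz = (Re z)^2 + (Im z + 1)^2" by (simp add: Dz_def cmod_power2)
            have a1: "\<bar>Re z\<bar> < 3/2 * y" using nz(2) rw y1' unfolding r_def abs_less_iff by linarith
            have a2: "\<bar>Im z + 1\<bar> < 5/2 * y" using nz(1) zH y1' unfolding r_def abs_less_iff by linarith
            have "(Re z)^2 < (3/2 * y)^2"
              using power_strict_mono[OF a1 abs_ge_zero, of 2] by simp
            moreover have "(Im z + 1)^2 < (5/2 * y)^2"
              using power_strict_mono[OF a2 abs_ge_zero, of 2] by simp
            ultimately show ?thesis unfolding e by (simp add: power2_eq_square algebra_simps)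
          qed
          have Dz0: "Dz \<ge> 0" by (simp add: Dz_def)
          define ei :: "real^'n" where "ei = axis i 1"
          define ej :: "real^'n" where "ej = axis j 1"
          define \<Delta> where "\<Delta> = (\<lambda>v. Q v (F u z) - Q v (F u \<i>))"
          have sz: "F u z $ j $ i = F u z $ i $ j" by (rule sym[OF sHu[OF zHH]])
          have si: "F u \<i> $ j $ i = F u \<i> $ i $ j" by (rule sym[OF sHu[OF Hi]])
          have eq2: "2 * (f z - f \<i>) = \<Delta> (ei + ej) - \<Delta> ei - \<Delta> ej"
            by (simp add: \<Delta>_def ei_def ej_def Q_axis Q_axis2 f_def sz si algebra_simps)
          have bnd: "cmod (\<Delta> v) * Im z \<le> c * Dz" if "cmod (Q v (F u \<i>)) \<le> c" for v c
          proof -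
            have "cmod (\<Delta> v) * Im z \<le> Im (Q v (F u \<i>)) * Dz"
              using Fbounds(2)[OF holu sHu zH, of v] by (simp add: \<Delta>_def Dz_def)
            also have "\<dots> \<le> c * Dz"
              using abs_Im_le_cmod[of "Q v (F u \<i>)"] that Dz0 by (intro mult_right_mono) auto
            finally show ?thesis .
          qed
          have q1: "cmod (Q (ei + ej) (F u \<i>)) \<le> 4 * B0"
          proof -
            have "cmod (Q (ei + ej) (F u \<i>)) \<le> cmod (F u \<i> $ i $ i) + cmod (F u \<i> $ i $ j) + cmod (F u \<i> $ j $ i) + cmod (F u \<i> $ j $ j)"
              unfolding ei_def ej_def Q_axis2 by (intro norm_triangle_le add_mono order.refl norm_triangle_ineq)
            then show ?thesis using entry[OF u, of i i] entry[OF u, of i j] entry[OF u, of j i] entry[OF u, of j j] by linarith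
          qed
          have q2: "cmod (Q ei (F u \<i>)) \<le> B0" unfolding ei_def Q_axis using entry[OF u] .
          have q3: "cmod (Q ej (F u \<i>)) \<le> B0" unfolding ej_def Q_axis using entry[OF u] .
          have "2 * cmod (f z - f \<i>) \<le> cmod (\<Delta> (ei + ej)) + cmod (\<Delta> ei) + cmod (\<Delta> ej)"
          proof -
            have "2 * cmod (f z - f \<i>) = cmod (\<Delta> (ei + ej) - \<Delta> ei - \<Delta> ej)"
            proof -
              have "2 * cmod (f z - f \<i>) = cmod (2 * (f z - f \<i>))" unfolding norm_mult by simp
              then show ?thesis unfolding eq2 .
            qed
            also have "\<dots> \<le> cmod (\<Delta> (ei + ej) - \<Delta> ei) + cmod (\<Delta> ej)" by (rule norm_triangle_ineq4)
            also have "\<dots> \<le> cmod (\<Delta> (ei + ej)) + cmod (\<Delta> ei) + cmod (\<Delta> ej)"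
              using norm_triangle_ineq4[of "\<Delta> (ei + ej)" "\<Delta> ei"] by linarith
            finally show ?thesis .
          qed
          then have "2 * cmod (f z - f \<i>) * Im z \<le> (cmod (\<Delta> (ei + ej)) + cmod (\<Delta> ei) + cmod (\<Delta> ej)) * Im z"
            using zH by (intro mult_right_mono) auto
          also have "\<dots> \<le> 4 * B0 * Dz + B0 * Dz + B0 * Dz"
            using bnd[OF q1] bnd[OF q2] bnd[OF q3] by (simp add: distrib_right)
          finally have k1: "cmod (f z - f \<i>) * Im z \<le> 3 * B0 * Dz" by (simp add: mult.commute mult.left_commute)
          have "cmod (f z - f \<i>) * (y / 2) \<le> cmod (f z - f \<i>) * Im z"
            using zlo by (intro mult_left_mono) auto
          also have "\<dots> \<le> 3 * B0 * Dz" by (rule k1)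
          also have "\<dots> < 3 * B0 * (17/2 * y^2)" using Dz_lt B0(1) by simp
          finally have "cmod (f z - f \<i>) * (y / 2) < (51 * B0 * y) * (y / 2)"
            by (simp add: power2_eq_square algebra_simps)
          then have "cmod (f z - f \<i>) < 51 * B0 * y" using ypos by (simp add: mult_less_cancel_right)
          then show ?thesis by (simp add: dist_norm norm_minus_commute)
        qed
        have "cmod ((deriv ^^ 1) f w) \<le> fact 1 * (51 * B0 * y) / r ^ 1"
          using Cauchy_higher_deriv_bound[OF holf contf inball rpos, where n="1::nat"] by simp
        then have "cmod (deriv f w) \<le> 102 * B0" using ypos by (simp add: r_def)
        then show ?thesis by (simp add: mat_deriv_def f_def Cd_def)
      qed
      show ?thesis unfolding C2_def by (rule det_abs_le[OF entries])
    qed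
  qed
qed

end
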